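(* Let $L$ be a minimal Koszul $L_\infty$-algebra and let $W=L^{(1)}$ be its weight one part. Then the canonical strict morphism of $L_\infty$-algebras $\mathbb{L}_\infty(W)\to L$ (extending the inclusion $W\subseteq L$) is surjective; that is, $L$ is generated in weight $1$.
   Context: Over $\mathbb Q$. An $L_\infty$-algebra $L$ (operations $l_n$ of degree $n-2$) is Koszul if it is equipped with a weight grading $L=\bigoplus_{w\ge1}L^{(w)}$ such that each $l_n$ is homogeneous of weight $2-n$ and the cochain complex $C^{CE}_*(L)^{(0)}\xrightarrow{b}C^{CE}_*(L)^{(1)}\xrightarrow{b}\cdots$ is exact, where $C^{CE}_*(L)=(\Lambda^c(sL),d+b)$ is the Chevalley–Eilenberg complex (cofree cocommutative coalgebra on $sL$ with the coderivation encoding the $l_n$), weight graded by letting $s$ have weight $-1$ (so $d+b$ raises weight by 1). $L$ is minimal if its differential is zero. $\mathbb{L}_\infty(W)$ denotes the free $L_\infty$-algebra on $W$; a strict morphism is one commuting with all operations. *)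

theory Defs
  imports Complex_Main
begin

(* A bigraded Q-vector space L = (+)_{d,w} L_d^{(w)} is given by a family of
   subspaces V d w of an ambient Q-vector space 'a (scalar multiplication scale);
   L is the EXTERNAL direct sum of the V d w, so we only ever work with
   homogeneous "tagged" elements (d, w, x) with x \<in> V d w
   (d = homological degree, w = weight).  All operations are determined by
   their values on homogeneous elements.  The operation l_n is given by
   l applied to a list of n tagged elements. *)

type_synonym 'a tg = "int \<times> int \<times> 'a"

definition tdeg :: "'a tg \<Rightarrow> int" where "tdeg t = fst t"
definition twt :: "'a tg \<Rightarrow> int" where "twt t = fst (snd t)"
definition tel :: "'a tg \<Rightarrow> 'a" where "tel t = snd (snd t)"

definition valid :: "(int \<Rightarrow> int \<Rightarrow> 'a set) \<Rightarrow> 'a tg \<Rightarrow> bool" where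
  "valid V t \<longleftrightarrow> tel t \<in> V (tdeg t) (twt t)"

definition sgn :: "int \<Rightarrow> rat" where
  "sgn k = (if even k then 1 else -1)"

definition is_subspace :: "(rat \<Rightarrow> 'a::ab_group_add \<Rightarrow> 'a) \<Rightarrow> 'a set \<Rightarrow> bool" where
  "is_subspace scale S \<longleftrightarrow> 0 \<in> S \<and> (\<forall>x\<in>S. \<forall>y\<in>S. x + y \<in> S) \<and> (\<forall>a. \<forall>x\<in>S. scale a x \<in> S)"

definition is_Q_vector_space :: "(rat \<Rightarrow> 'a::ab_group_add \<Rightarrow> 'a) \<Rightarrow> bool" where
  "is_Q_vector_space scale \<longleftrightarrow>
     (\<forall>a x y. scale a (x + y) = scale a x + scale a y) \<and>
     (\<forall>a b x. scale (a + b) x = scale a x + scale b x) \<and>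
     (\<forall>a b x. scale a (scale b x) = scale (a * b) x) \<and>
     (\<forall>x. scale 1 x = x)"

definition sdeg :: "'a tg list \<Rightarrow> int" where "sdeg ts = (\<Sum>t\<leftarrow>ts. tdeg t)"
definition swt :: "'a tg list \<Rightarrow> int" where "swt ts = (\<Sum>t\<leftarrow>ts. twt t)"

definition out_tag :: "(('a tg list) \<Rightarrow> 'a) \<Rightarrow> 'a tg list \<Rightarrow> 'a tg" where
  "out_tag l ts = (sdeg ts + int (length ts) - 2, swt ts + 2 - int (length ts), l ts)"

definition l_typed :: "(int \<Rightarrow> int \<Rightarrow> 'a set) \<Rightarrow> ('a tg list \<Rightarrow> 'a) \<Rightarrow> bool" where
  "l_typed V l \<longleftrightarrow> (\<forall>ts. length ts \<ge> 1 \<longrightarrow> list_all (valid V) ts \<longrightarrow> valid V (out_tag l ts))"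

definition l_multilinear :: "(rat \<Rightarrow> 'a::ab_group_add \<Rightarrow> 'a) \<Rightarrow> (int \<Rightarrow> int \<Rightarrow> 'a set) \<Rightarrow> ('a tg list \<Rightarrow> 'a) \<Rightarrow> bool" where
  "l_multilinear scale V l \<longleftrightarrow>
     (\<forall>ts i d w x y a b. list_all (valid V) ts \<longrightarrow> i < length ts \<longrightarrow> x \<in> V d w \<longrightarrow> y \<in> V d w \<longrightarrow>
        l (ts[i := (d, w, scale a x + scale b y)]) =
          scale a (l (ts[i := (d, w, x)])) + scale b (l (ts[i := (d, w, y)])))"

definition l_antisymmetric :: "(rat \<Rightarrow> 'a::ab_group_add \<Rightarrow> 'a) \<Rightarrow> (int \<Rightarrow> int \<Rightarrow> 'a set) \<Rightarrow> ('a tg list \<Rightarrow> 'a) \<Rightarrow> bool" where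
  "l_antisymmetric scale V l \<longleftrightarrow>
     (\<forall>us s t vs. list_all (valid V) (us @ [s, t] @ vs) \<longrightarrow>
        l (us @ [s, t] @ vs) = scale (- sgn (tdeg s * tdeg t)) (l (us @ [t, s] @ vs)))"

(* ---------------- The Chevalley-Eilenberg complex (Lambda^c(sL), d+b) ----------------
   Lambda(sL) is realised as the graded-symmetric coinvariants of the tensor algebra on sL:
   formal Q-linear combinations of words of tagged elements (a word [t1,..,tk] stands for
   s t1 ... s tk), modulo the subspace spanned by multilinearity and graded-symmetry relations
   (with respect to the suspended degree tdeg t + 1).  Over Q this is the cofree cocommutative
   (conilpotent) coalgebra on sL as a graded vector space. *)

type_synonym 'a fsum = "'a tg list \<Rightarrow> rat"

definition word :: "'a tg list \<Rightarrow> 'a fsum" where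
  "word ys = (\<lambda>z. if z = ys then 1 else 0)"

definition fs_add :: "'a fsum \<Rightarrow> 'a fsum \<Rightarrow> 'a fsum" where
  "fs_add f g = (\<lambda>z. f z + g z)"
definition fs_scale :: "rat \<Rightarrow> 'a fsum \<Rightarrow> 'a fsum" where
  "fs_scale c f = (\<lambda>z. c * f z)"
definition fs_diff :: "'a fsum \<Rightarrow> 'a fsum \<Rightarrow> 'a fsum" where
  "fs_diff f g = (\<lambda>z. f z - g z)"

definition supp :: "'a fsum \<Rightarrow> 'a tg list set" where
  "supp f = {z. f z \<noteq> 0}"

definition shdeg :: "'a tg \<Rightarrow> int" where "shdeg t = tdeg t + 1"

inductive_set rel_space :: "(rat \<Rightarrow> 'a::ab_group_add \<Rightarrow> 'a) \<Rightarrow> (int \<Rightarrow> int \<Rightarrow> 'a set) \<Rightarrow> 'a fsum set"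
  for scale V where
  rel_zero: "(\<lambda>z. 0) \<in> rel_space scale V"
| rel_add: "f \<in> rel_space scale V \<Longrightarrow> g \<in> rel_space scale V \<Longrightarrow> fs_add f g \<in> rel_space scale V"
| rel_scale: "f \<in> rel_space scale V \<Longrightarrow> fs_scale c f \<in> rel_space scale V"
| rel_lin: "list_all (valid V) ys \<Longrightarrow> i < length ys \<Longrightarrow> x \<in> V d w \<Longrightarrow> y \<in> V d w \<Longrightarrow>
     fs_diff (word (ys[i := (d, w, scale a x + scale b y)]))
        (fs_add (fs_scale a (word (ys[i := (d, w, x)]))) (fs_scale b (word (ys[i := (d, w, y)]))))
     \<in> rel_space scale V"
| rel_sym: "list_all (valid V) (us @ [s, t] @ vs) \<Longrightarrow>
     fs_diff (word (us @ [s, t] @ vs)) (fs_scale (sgn (shdeg s * shdeg t)) (word (us @ [t, s] @ vs)))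
     \<in> rel_space scale V"

(* decalage sign: q_n(s x_1,...,s x_n) = (-1)^{sum_i (n-i)|x_i|} s l_n(x_1,...,x_n) *)
definition dec_sign :: "'a tg list \<Rightarrow> rat" where
  "dec_sign ts = sgn (\<Sum>i<length ts. int (length ts - 1 - i) * tdeg (ts ! i))"

(* Koszul sign of the unshuffle moving the positions S of ys to the front *)
definition kos_sign :: "nat set \<Rightarrow> 'a tg list \<Rightarrow> rat" where
  "kos_sign S ys = sgn (\<Sum>(i, j)\<in>{(i, j). i < j \<and> j < length ys \<and> i \<notin> S \<and> j \<in> S}.
                          shdeg (ys ! i) * shdeg (ys ! j))"

(* coderivation on a word, using the brackets q_k with k \<in> K:
   y_1...y_n |-> sum over unshuffles (S, S^c), |S| \<in> K, of
                  eps * q_{|S|}(y_S) . y_{S^c} *)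
definition cod_word :: "nat set \<Rightarrow> ('a tg list \<Rightarrow> 'a) \<Rightarrow> 'a tg list \<Rightarrow> 'a fsum" where
  "cod_word K l ys = (\<lambda>z. \<Sum>S\<in>{S. S \<subseteq> {..<length ys} \<and> card S \<in> K}.
       (if z = out_tag l (nths ys S) # nths ys ({..<length ys} - S)
        then kos_sign S ys * dec_sign (nths ys S) else 0))"

definition cod :: "nat set \<Rightarrow> ('a tg list \<Rightarrow> 'a) \<Rightarrow> 'a fsum \<Rightarrow> 'a fsum" where
  "cod K l f = (\<lambda>z. \<Sum>ys\<in>supp f. f ys * cod_word K l ys z)"

definition CE_D :: "('a tg list \<Rightarrow> 'a) \<Rightarrow> 'a fsum \<Rightarrow> 'a fsum" where
  "CE_D l = cod {1..} l"
definition CE_b :: "('a tg list \<Rightarrow> 'a) \<Rightarrow> 'a fsum \<Rightarrow> 'a fsum" where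
  "CE_b l = cod {2..} l"

(* L_infinity relations: (d+b)^2 = 0 on the CE complex *)
definition CE_square_zero :: "(rat \<Rightarrow> 'a::ab_group_add \<Rightarrow> 'a) \<Rightarrow> (int \<Rightarrow> int \<Rightarrow> 'a set) \<Rightarrow> ('a tg list \<Rightarrow> 'a) \<Rightarrow> bool" where
  "CE_square_zero scale V l \<longleftrightarrow>
     (\<forall>ys. list_all (valid V) ys \<longrightarrow> CE_D l (CE_D l (word ys)) \<in> rel_space scale V)"

definition Linf_algebra :: "(rat \<Rightarrow> 'a::ab_group_add \<Rightarrow> 'a) \<Rightarrow> (int \<Rightarrow> int \<Rightarrow> 'a set) \<Rightarrow> ('a tg list \<Rightarrow> 'a) \<Rightarrow> bool" where
  "Linf_algebra scale V l \<longleftrightarrow>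
     is_Q_vector_space scale \<and> (\<forall>d w. is_subspace scale (V d w)) \<and>
     l_typed V l \<and> l_multilinear scale V l \<and> l_antisymmetric scale V l \<and>
     CE_square_zero scale V l"

definition minimal_Linf :: "(int \<Rightarrow> int \<Rightarrow> 'a::zero set) \<Rightarrow> ('a tg list \<Rightarrow> 'a) \<Rightarrow> bool" where
  "minimal_Linf V l \<longleftrightarrow> (\<forall>t. valid V t \<longrightarrow> l [t] = 0)"

(* elements of the CE complex, and its weight grading (s has weight -1) *)
definition CE_elem :: "(int \<Rightarrow> int \<Rightarrow> 'a set) \<Rightarrow> 'a fsum \<Rightarrow> bool" where
  "CE_elem V f \<longleftrightarrow> finite (supp f) \<and> (\<forall>ys\<in>supp f. list_all (valid V) ys)"

definition word_weight :: "'a tg list \<Rightarrow> int" where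
  "word_weight ys = (\<Sum>t\<leftarrow>ys. twt t - 1)"

definition of_weight :: "int \<Rightarrow> 'a fsum \<Rightarrow> bool" where
  "of_weight p f \<longleftrightarrow> (\<forall>ys\<in>supp f. word_weight ys = p)"

(* Koszul: weights \<ge> 1, and C^(0) -> C^(1) -> C^(2) -> ... (differential b) is exact,
   i.e. exact at C^(p) for every p \<ge> 1 (cohomology concentrated in weight 0). *)
definition koszul :: "(rat \<Rightarrow> 'a::ab_group_add \<Rightarrow> 'a) \<Rightarrow> (int \<Rightarrow> int \<Rightarrow> 'a set) \<Rightarrow> ('a tg list \<Rightarrow> 'a) \<Rightarrow> bool" where
  "koszul scale V l \<longleftrightarrow>
     (\<forall>d w. w < 1 \<longrightarrow> V d w = {0}) \<and>
     (\<forall>p f. p \<ge> 1 \<longrightarrow> CE_elem V f \<longrightarrow> of_weight p f \<longrightarrow> CE_b l f \<in> rel_space scale V \<longrightarrow>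
        (\<exists>g. CE_elem V g \<and> of_weight (p - 1) g \<and> fs_diff f (CE_b l g) \<in> rel_space scale V))"

(* The image of the canonical strict morphism L_inf(W) -> L, W = L^(1):
   the smallest bigraded subspace containing W closed under all operations l_n. *)
inductive gen_wt1 :: "(rat \<Rightarrow> 'a::ab_group_add \<Rightarrow> 'a) \<Rightarrow> (int \<Rightarrow> int \<Rightarrow> 'a set) \<Rightarrow> ('a tg list \<Rightarrow> 'a) \<Rightarrow> int \<Rightarrow> int \<Rightarrow> 'a \<Rightarrow> bool"
  for scale V l where
  gen_W: "x \<in> V d 1 \<Longrightarrow> gen_wt1 scale V l d 1 x"
| gen_zero: "gen_wt1 scale V l d w 0"
| gen_lin: "gen_wt1 scale V l d w x \<Longrightarrow> gen_wt1 scale V l d w y \<Longrightarrow>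
     gen_wt1 scale V l d w (scale a x + scale b y)"
| gen_op: "length ts \<ge> 1 \<Longrightarrow> list_all (\<lambda>t. gen_wt1 scale V l (tdeg t) (twt t) (tel t)) ts \<Longrightarrow>
     gen_wt1 scale V l (sdeg ts + int (length ts) - 2) (swt ts + 2 - int (length ts)) (l ts)"

end

theory Submission
  imports Defs
begin

lemma vs_scale0:
  assumes "is_Q_vector_space scale" shows "scale 0 x = 0"
proof -
  have "scale (0+0) x = scale 0 x + scale 0 x" using assms unfolding is_Q_vector_space_def by blast
  thus ?thesis by simp
qed

lemma vs_scale_zero:
  assumes "is_Q_vector_space scale" shows "scale a 0 = 0"
proof -
  have "scale a (0+0) = scale a 0 + scale a 0" using assms unfolding is_Q_vector_space_def by blast
  thus ?thesis by simp
qed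

lemma vs_one: "is_Q_vector_space scale \<Longrightarrow> scale 1 x = x"
  unfolding is_Q_vector_space_def by blast
lemma vs_add_r: "is_Q_vector_space scale \<Longrightarrow> scale a (x + y) = scale a x + scale a y"
  unfolding is_Q_vector_space_def by blast
lemma vs_add_l: "is_Q_vector_space scale \<Longrightarrow> scale (a + b) x = scale a x + scale b x"
  unfolding is_Q_vector_space_def by blast
lemma vs_assoc: "is_Q_vector_space scale \<Longrightarrow> scale a (scale b x) = scale (a * b) x"
  unfolding is_Q_vector_space_def by blast

lemma vs_diff_l:
  assumes "is_Q_vector_space scale" shows "scale (a - b) x = scale a x - scale b x"
proof -
  have "scale a x = scale ((a - b) + b) x" by simp
  also have "\<dots> = scale (a-b) x + scale b x" using vs_add_l[OF assms] by blast
  finally show ?thesis by (simp add: algebra_simps)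
qed

lemma vs_sum_r:
  assumes "is_Q_vector_space scale"
  shows "scale a (\<Sum>e\<in>E. f e) = (\<Sum>e\<in>E. scale a (f e))"
proof (cases "finite E")
  case True then show ?thesis
    by (induction E rule: finite_induct) (auto simp: vs_scale_zero[OF assms] vs_add_r[OF assms])
next
  case False then show ?thesis by (simp add: vs_scale_zero[OF assms])
qed

section \<open>Projection to length-one words\<close>

definition phi :: "(rat \<Rightarrow> 'a::ab_group_add \<Rightarrow> 'a) \<Rightarrow> int \<Rightarrow> int \<Rightarrow> 'a set \<Rightarrow> 'a fsum \<Rightarrow> 'a" where
  "phi scale d w E f = (\<Sum>e\<in>E. scale (f [(d,w,e)]) e)"

definition Eset :: "int \<Rightarrow> int \<Rightarrow> 'a fsum \<Rightarrow> 'a set" where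
  "Eset d w f = {e. f [(d,w,e)] \<noteq> 0}"

lemma phi_add:
  "is_Q_vector_space scale \<Longrightarrow> phi scale d w E (fs_add f g) = phi scale d w E f + phi scale d w E g"
  unfolding phi_def fs_add_def by (simp add: vs_add_l sum.distrib)

lemma phi_diff:
  "is_Q_vector_space scale \<Longrightarrow> phi scale d w E (fs_diff f g) = phi scale d w E f - phi scale d w E g"
  unfolding phi_def fs_diff_def by (simp add: vs_diff_l sum_subtractf)

lemma phi_scale:
  "is_Q_vector_space scale \<Longrightarrow> phi scale d w E (fs_scale c f) = scale c (phi scale d w E f)"
  unfolding phi_def fs_scale_def by (simp add: vs_sum_r vs_assoc)

lemma phi_word:
  assumes vs: "is_Q_vector_space scale" and fin: "finite E"
  shows "phi scale d w E (word z) =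
     (if z = [(d,w,tel (hd z))] \<and> tel (hd z) \<in> E then tel (hd z) else 0)"
proof -
  have "phi scale d w E (word z) = (\<Sum>e\<in>E. if tel (hd z) = e \<and> z = [(d,w,tel (hd z))] then e else 0)"
    unfolding phi_def word_def
    by (rule sum.cong) (auto simp: vs_one[OF vs] vs_scale0[OF vs] tel_def)
  also have "\<dots> = (if z = [(d,w,tel (hd z))] \<and> tel (hd z) \<in> E then tel (hd z) else 0)"
    using fin by (cases "z = [(d,w,tel (hd z))]") (auto simp: sum.delta)
  finally show ?thesis .
qed

lemma phi_mono:
  assumes vs: "is_Q_vector_space scale" and "Eset d w f \<subseteq> E" "E \<subseteq> E'" "finite E'"
  shows "phi scale d w E' f = phi scale d w E f"
  unfolding phi_def
proof (rule sum.mono_neutral_right)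
  show "finite E'" by fact
  show "E \<subseteq> E'" by fact
  show "\<forall>i\<in>E' - E. scale (f [(d, w, i)]) i = 0"
  proof
    fix i assume "i \<in> E' - E"
    hence "f [(d,w,i)] = 0" using assms(2) unfolding Eset_def by blast
    thus "scale (f [(d, w, i)]) i = 0" by (simp add: vs_scale0[OF vs])
  qed
qed

lemma upd_single: "i < length ys \<Longrightarrow> ys[i := t] = [u] \<Longrightarrow> length ys = 1 \<and> t = u"
  by (cases ys; cases i) (auto simp: eq_commute[of "[]"])

lemma phi_Eset_empty:
  assumes vs: "is_Q_vector_space scale" and "Eset d w f = {}"
  shows "phi scale d w E f = 0"
proof -
  have "\<And>e. f [(d,w,e)] = 0" using assms(2) unfolding Eset_def by blast
  thus ?thesis unfolding phi_def by (simp add: vs_scale0[OF vs])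
qed

lemma rel_phi:
  assumes vs: "is_Q_vector_space scale"
    and f: "f \<in> rel_space scale V"
  shows "finite (Eset d w f) \<and> (\<forall>E. finite E \<longrightarrow> Eset d w f \<subseteq> E \<longrightarrow> phi scale d w E f = 0)"
  using f
proof (induction rule: rel_space.induct)
  case rel_zero
  then show ?case by (auto simp: Eset_def phi_def vs_scale0[OF vs])
next
  case (rel_add f g)
  have sub: "Eset d w (fs_add f g) \<subseteq> Eset d w f \<union> Eset d w g"
    by (auto simp: Eset_def fs_add_def)
  have ff: "finite (Eset d w f)" and fg: "finite (Eset d w g)" using rel_add.IH by simp_all
  have fin: "finite (Eset d w (fs_add f g))" using sub ff fg by (meson finite_Un finite_subset)
  show ?case
  proof (intro conjI allI impI fin)
    fix E assume E: "finite E" "Eset d w (fs_add f g) \<subseteq> E"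
    let ?E' = "E \<union> Eset d w f \<union> Eset d w g"
    have fE': "finite ?E'" using E ff fg by simp
    have "phi scale d w E (fs_add f g) = phi scale d w ?E' (fs_add f g)"
      by (rule phi_mono[OF vs E(2) _ fE', symmetric]) blast
    also have "\<dots> = phi scale d w ?E' f + phi scale d w ?E' g" by (rule phi_add[OF vs])
    also have "\<dots> = 0"
    proof -
      have "phi scale d w ?E' f = 0" using rel_add.IH(1) fE' by (meson Un_upper1 Un_upper2 subset_trans)
      moreover have "phi scale d w ?E' g = 0" using rel_add.IH(2) fE' by (meson Un_upper2)
      ultimately show ?thesis by simp
    qed
    finally show "phi scale d w E (fs_add f g) = 0" .
  qed
next
  case (rel_scale f c)
  have sub: "Eset d w (fs_scale c f) \<subseteq> Eset d w f"
    by (auto simp: Eset_def fs_scale_def)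
  have ff: "finite (Eset d w f)" using rel_scale.IH by simp
  have fin: "finite (Eset d w (fs_scale c f))" using sub ff by (meson finite_subset)
  show ?case
  proof (intro conjI allI impI fin)
    fix E assume E: "finite E" "Eset d w (fs_scale c f) \<subseteq> E"
    let ?E' = "E \<union> Eset d w f"
    have fE': "finite ?E'" using E ff by simp
    have "phi scale d w E (fs_scale c f) = phi scale d w ?E' (fs_scale c f)"
      by (rule phi_mono[OF vs E(2) _ fE', symmetric]) blast
    also have "\<dots> = scale c (phi scale d w ?E' f)" by (rule phi_scale[OF vs])
    also have "\<dots> = 0"
    proof -
      have "phi scale d w ?E' f = 0" using rel_scale.IH fE' by (meson Un_upper2)
      thus ?thesis by (simp add: vs_scale_zero[OF vs])
    qed
    finally show "phi scale d w E (fs_scale c f) = 0" .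
  qed
next
  case (rel_lin ys i x d' w' y a b)
  let ?A = "ys[i := (d', w', scale a x + scale b y)]"
  let ?B = "ys[i := (d', w', x)]"
  let ?C = "ys[i := (d', w', y)]"
  let ?f = "fs_diff (word ?A) (fs_add (fs_scale a (word ?B)) (fs_scale b (word ?C)))"
  let ?S = "{scale a x + scale b y, x, y}"
  have sub: "Eset d w ?f \<subseteq> ?S"
  proof
    fix e assume "e \<in> Eset d w ?f"
    hence "[(d,w,e)] = ?A \<or> [(d,w,e)] = ?B \<or> [(d,w,e)] = ?C"
      by (auto simp: Eset_def fs_diff_def fs_add_def fs_scale_def word_def split: if_splits)
    then show "e \<in> ?S"
      using rel_lin(2) by (cases ys; cases i) (auto simp: eq_commute[of "[]"])
  qed
  have fin: "finite (Eset d w ?f)" using sub finite_subset by blast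
  show ?case
  proof (intro conjI allI impI fin)
    fix E assume E: "finite E" "Eset d w ?f \<subseteq> E"
    let ?E' = "E \<union> ?S"
    have fE': "finite ?E'" using E by blast
    have "phi scale d w E ?f = phi scale d w ?E' ?f"
      by (rule phi_mono[OF vs E(2) _ fE', symmetric]) blast
    also have "\<dots> = phi scale d w ?E' (word ?A) - (scale a (phi scale d w ?E' (word ?B))
        + scale b (phi scale d w ?E' (word ?C)))"
      by (simp add: phi_diff[OF vs] phi_add[OF vs] phi_scale[OF vs])
    also have "\<dots> = 0"
    proof (cases "length ys = 1 \<and> d' = d \<and> w' = w")
      case True
      then obtain t where ys: "ys = [t]" by (cases ys) auto
      have i: "i = 0" using rel_lin(2) ys by simp
      show ?thesis using True ys i fE'
        by (simp add: phi_word[OF vs] tel_def)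
    next
      case False
      have nA: "?A \<noteq> [(d,w,e)]" "?B \<noteq> [(d,w,e)]" "?C \<noteq> [(d,w,e)]" for e
        using False upd_single[OF rel_lin(2)] by blast+
      show ?thesis using fE' nA
        by (simp add: phi_word[OF vs] vs_scale_zero[OF vs] del: length_list_update)
    qed
    finally show "phi scale d w E ?f = 0" .
  qed
next
  case (rel_sym us s t vs')
  let ?f = "fs_diff (word (us @ [s, t] @ vs')) (fs_scale (sgn (shdeg s * shdeg t)) (word (us @ [t, s] @ vs')))"
  have "Eset d w ?f = {}"
    by (auto simp: Eset_def fs_diff_def fs_scale_def word_def)
  then show ?case by (simp add: phi_Eset_empty[OF vs])
qed

lemma sum_list_ge_mem:
  fixes xs :: "int list"
  shows "(\<forall>y\<in>set xs. 0 \<le> y) \<Longrightarrow> x \<in> set xs \<Longrightarrow> x \<le> sum_list xs"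
  by (induction xs) (auto intro: add_increasing add_increasing2 sum_list_nonneg)

lemma cod_word_single:
  assumes "cod_word K l ys [t] \<noteq> 0"
  shows "length ys \<in> K \<and> t = out_tag l ys"
proof -
  obtain S where S: "S \<subseteq> {..<length ys}" "card S \<in> K"
      "[t] = out_tag l (nths ys S) # nths ys ({..<length ys} - S)"
  proof (rule ccontr)
    assume "\<not> thesis"
    with that have "\<forall>S\<in>{S. S \<subseteq> {..<length ys} \<and> card S \<in> K}.
        (if [t] = out_tag l (nths ys S) # nths ys ({..<length ys} - S)
        then kos_sign S ys * dec_sign (nths ys S) else 0) = 0" by auto
    hence "cod_word K l ys [t] = 0" unfolding cod_word_def by (rule sum.neutral)
    with assms show False by simp
  qed
  have "nths ys ({..<length ys} - S) = []" using S(3) by simp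
  hence "card {i. i < length ys \<and> i \<in> {..<length ys} - S} = 0" by (metis length_nths list.size(3))
  hence "{i. i < length ys \<and> i \<in> {..<length ys} - S} = {}" by (simp add: card_eq_0_iff)
  hence SS: "S = {..<length ys}" using S(1) by auto
  hence "nths ys S = ys" by (simp add: nths_all)
  with S SS show ?thesis by simp
qed

lemma gen_scale:
  assumes vs: "is_Q_vector_space scale" and "gen_wt1 scale V l d w x"
  shows "gen_wt1 scale V l d w (scale c x)"
  using gen_lin[OF assms(2) assms(2), of c 0] by (simp add: vs_scale0[OF vs])

lemma gen_sum:
  assumes vs: "is_Q_vector_space scale" and "finite A" and "\<forall>e\<in>A. gen_wt1 scale V l d w (f e)"
  shows "gen_wt1 scale V l d w (\<Sum>e\<in>A. f e)"
  using assms(2,3)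
proof (induction A rule: finite_induct)
  case empty then show ?case by (simp add: gen_zero)
next
  case (insert a A)
  then have "gen_wt1 scale V l d w (scale 1 (f a) + scale 1 (\<Sum>e\<in>A. f e))"
    by (intro gen_lin) auto
  with insert show ?case by (simp add: vs_one[OF vs])
qed

lemma l_zero:
  assumes vs: "is_Q_vector_space scale" and sub: "\<forall>d w. is_subspace scale (V d w)"
    and ml: "l_multilinear scale V l"
    and ys: "list_all (valid V) ys" and i: "i < length ys" and z: "tel (ys ! i) = 0"
  shows "l ys = 0"
proof -
  obtain d' w' e where yi: "ys ! i = (d', w', e)" by (cases "ys ! i") auto
  have e: "e = 0" using z yi by (simp add: tel_def)
  have z0: "(0::'a) \<in> V d' w'" using sub unfolding is_subspace_def by blast
  have "l (ys[i := (d', w', scale 0 0 + scale 0 0)]) =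
        scale 0 (l (ys[i := (d', w', 0)])) + scale 0 (l (ys[i := (d', w', 0)]))"
    using ml ys i z0 unfolding l_multilinear_def by blast
  moreover have "ys[i := (d', w', scale 0 0 + scale 0 0)] = ys"
    using yi e list_update_id[of ys i] by (simp add: vs_scale0[OF vs])
  ultimately show ?thesis by (simp add: vs_scale0[OF vs])
qed

theorem proposition2p24:
  fixes scale :: "rat \<Rightarrow> 'a::ab_group_add \<Rightarrow> 'a"
    and V :: "int \<Rightarrow> int \<Rightarrow> 'a set"
    and l :: "(int \<times> int \<times> 'a) list \<Rightarrow> 'a"
  assumes "Linf_algebra scale V l"
    and "minimal_Linf V l"
    and "koszul scale V l"
  shows "\<forall>d w x. x \<in> V d w \<longrightarrow> gen_wt1 scale V l d w x"
proof -
  have vs: "is_Q_vector_space scale" and sub: "\<forall>d w. is_subspace scale (V d w)"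
    and ml: "l_multilinear scale V l"
    using assms(1) unfolding Linf_algebra_def by blast+
  have low: "\<And>d w. w < 1 \<Longrightarrow> V d w = {0}" using assms(3) unfolding koszul_def by blast
  have ex: "\<And>p f. p \<ge> 1 \<Longrightarrow> CE_elem V f \<Longrightarrow> of_weight p f \<Longrightarrow> CE_b l f \<in> rel_space scale V \<Longrightarrow>
        (\<exists>g. CE_elem V g \<and> of_weight (p - 1) g \<and> fs_diff f (CE_b l g) \<in> rel_space scale V)"
    using assms(3) unfolding koszul_def by blast
  have P: "\<forall>d w x. nat w = n \<longrightarrow> x \<in> V d w \<longrightarrow> gen_wt1 scale V l d w x" for n
  proof (induction n rule: less_induct)
    case (less n)
    show ?case
    proof (intro allI impI)
      fix d w x assume nw: "nat w = n" and x: "x \<in> V d w"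
      show "gen_wt1 scale V l d w x"
      proof (cases "w < 1")
        case True
        then have "x = 0" using low x by blast
        then show ?thesis by (simp add: gen_zero)
      next
        case False
        show ?thesis
        proof (cases "w = 1")
          case True then show ?thesis using x by (simp add: gen_W)
        next
          case False
          with \<open>\<not> w < 1\<close> have w2: "w \<ge> 2" by simp
          define t0 where "t0 = (d, w, x)"
          define f where "f = word [t0]"
          have suppf: "supp f = {[t0]}" by (auto simp: supp_def f_def word_def)
          have vt0: "valid V t0" using x by (simp add: valid_def t0_def tdeg_def twt_def tel_def)
          have cef: "CE_elem V f" using vt0 suppf by (simp add: CE_elem_def)
          have owf: "of_weight (w - 1) f" using suppf
            by (simp add: of_weight_def word_weight_def t0_def twt_def)
          have noS: "{S. S \<subseteq> {..<length [t0]} \<and> card S \<in> {2..}} = {}"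
          proof (rule ccontr)
            assume "{S. S \<subseteq> {..<length [t0]} \<and> card S \<in> {2..}} \<noteq> {}"
            then obtain S where "S \<subseteq> {..<Suc 0}" "card S \<ge> 2" by auto
            moreover have "card S \<le> card {..<Suc 0}" using calculation by (intro card_mono) auto
            ultimately show False by simp
          qed
          have "CE_b l f = (\<lambda>z. 0)"
            unfolding CE_b_def cod_def suppf cod_word_def
          proof (rule ext)
            fix z
            have "(\<Sum>S\<in>{S. S \<subseteq> {..<length [t0]} \<and> card S \<in> {2..}}.
               (if z = out_tag l (nths [t0] S) # nths [t0] ({..<length [t0]} - S)
                then kos_sign S [t0] * dec_sign (nths [t0] S) else 0)) = 0"
              by (simp only: noS sum.empty)
            then show "(\<Sum>ys\<in>{[t0]}. f ys * (\<Sum>S\<in>{S. S \<subseteq> {..<length ys} \<and> card S \<in> {2..}}.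
               (if z = out_tag l (nths ys S) # nths ys ({..<length ys} - S)
                then kos_sign S ys * dec_sign (nths ys S) else 0))) = 0"
              by (simp only: sum.insert finite.emptyI empty_iff not_False_eq_True sum.empty)
          qed
          hence "CE_b l f \<in> rel_space scale V" by (simp add: rel_zero)
          then obtain g where ceg: "CE_elem V g" and owg: "of_weight (w - 1 - 1) g"
            and h: "fs_diff f (CE_b l g) \<in> rel_space scale V"
            using ex[OF _ cef owf] w2 by auto
          define h where "h = fs_diff f (CE_b l g)"
          have rh: "finite (Eset d w h) \<and> (\<forall>E. finite E \<longrightarrow> Eset d w h \<subseteq> E \<longrightarrow> phi scale d w E h = 0)"
            using rel_phi[OF vs h] h_def by simp
          define E where "E = Eset d w h \<union> {x}"
          have fE: "finite E" using rh E_def by simp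
          have "phi scale d w E h = 0" using rh fE E_def by blast
          hence "phi scale d w E f = phi scale d w E (CE_b l g)"
            by (simp add: h_def phi_diff[OF vs])
          moreover have "phi scale d w E f = x"
            using fE by (simp add: f_def phi_word[OF vs] t0_def tel_def E_def)
          ultimately have xeq: "x = (\<Sum>e\<in>E. scale (CE_b l g [(d,w,e)]) e)"
            by (simp add: phi_def)
          have trm: "gen_wt1 scale V l d w (scale (CE_b l g [(d,w,e)]) e)" for e
          proof (cases "CE_b l g [(d,w,e)] = 0")
            case True then show ?thesis by (simp add: vs_scale0[OF vs] gen_zero)
          next
            case False
            have "(\<Sum>ys\<in>supp g. g ys * cod_word {2..} l ys [(d,w,e)]) \<noteq> 0"
              using False by (simp add: CE_b_def cod_def)
            then obtain ys where ysg: "ys \<in> supp g" and cw: "cod_word {2..} l ys [(d,w,e)] \<noteq> 0"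
              by (metis (no_types, lifting) mult_zero_right sum.neutral)
            from cod_word_single[OF cw] have len: "length ys \<ge> 2" and tg: "(d,w,e) = out_tag l ys"
              by auto
            have vys: "list_all (valid V) ys" using ceg ysg by (simp add: CE_elem_def)
            have wwys: "word_weight ys = w - 2" using owg ysg by (simp add: of_weight_def)
            have tg': "d = sdeg ys + int (length ys) - 2" "w = swt ys + 2 - int (length ys)" "e = l ys"
              using tg by (simp_all add: out_tag_def)
            have "gen_wt1 scale V l d w e"
            proof (cases "\<exists>j<length ys. twt (ys ! j) < 1")
              case True
              then obtain j where j: "j < length ys" "twt (ys ! j) < 1" by blast
              have "tel (ys ! j) \<in> V (tdeg (ys ! j)) (twt (ys ! j))"
                using vys j(1) by (simp add: list_all_length valid_def)
              hence "tel (ys ! j) = 0" using low[OF j(2)] by blast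
              hence "l ys = 0" using l_zero[OF vs sub ml vys j(1)] by blast
              then show ?thesis using tg' by (simp add: gen_zero)
            next
              case False
              have allge: "\<forall>t\<in>set ys. twt t \<ge> 1" using False by (metis in_set_conv_nth not_less)
              have "list_all (\<lambda>t. gen_wt1 scale V l (tdeg t) (twt t) (tel t)) ys"
                unfolding list_all_iff
              proof
                fix t assume t: "t \<in> set ys"
                have "twt t - 1 \<le> word_weight ys"
                  unfolding word_weight_def
                  using allge t by (intro sum_list_ge_mem) auto
                hence "twt t < w" using wwys by simp
                moreover have "twt t \<ge> 1" using allge t by blast
                ultimately have "nat (twt t) < n" using nw by simp
                moreover have "tel t \<in> V (tdeg t) (twt t)"
                  using vys t by (simp add: list_all_iff valid_def)
                ultimately show "gen_wt1 scale V l (tdeg t) (twt t) (tel t)"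
                  using less.IH by blast
              qed
              from gen_op[OF _ this] len have "gen_wt1 scale V l (sdeg ys + int (length ys) - 2)
                  (swt ys + 2 - int (length ys)) (l ys)" by simp
              then show ?thesis using tg' by simp
            qed
            then show ?thesis using tg' gen_scale[OF vs] by blast
          qed
          have "gen_wt1 scale V l d w (\<Sum>e\<in>E. scale (CE_b l g [(d,w,e)]) e)"
            by (rule gen_sum[OF vs fE]) (simp add: trm)
          then show ?thesis using xeq by simp
        qed
      qed
    qed
  qed
  show ?thesis using P by blast
qed

end
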